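(* Let $k\ge1$ and let $\mathcal{C}$ be a multiset of non-zero residues modulo $2^{k+1}$ such that no sub-collection of $\mathcal{C}$ sums to $2^k$ modulo $2^{k+1}$. Let $T_1(\mathcal{C})$, $T_2(\mathcal{C})$, $T_3(\mathcal{C})$ denote the results of applying a type 1, type 2, type 3 compression to $\mathcal{C}$ respectively (whenever such a compression is possible). Then $T_1(\mathcal{C})^*=\mathcal{C}^*$, $T_2(\mathcal{C})^*\subseteq\mathcal{C}^*$ and $T_3(\mathcal{C})^*\subseteq\mathcal{C}^*$. Moreover, if $T_2(\mathcal{C})$ or $T_3(\mathcal{C})$ contains $m$ pairwise disjoint non-empty sub-collections each summing to $0$ modulo $2^{k+1}$, then so does $\mathcal{C}$. Finally, if $T_1(\mathcal{C},t)$ denotes the result of a type 1 compression replacing the element $t$, and $T_1(\mathcal{C},t)$ contains $m+|t|-1$ pairwise disjoint non-empty sub-collections each summing to $0$ modulo $2^{k+1}$, then $\mathcal{C}$ contains at least $m$ such sub-collections.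
   Context: Multisets are called collections; disjoint sub-collections use disjoint occurrences of elements. For a multiset $\mathcal{D}=\{a_1,\dots,a_d\}$ of residues modulo $2^{k+1}$, the iterated sumset is the set $\mathcal{D}^*=\{\sum_{i\in I}a_i \bmod 2^{k+1}: I\subseteq[d]\}$ (including the empty sum $0$). For a residue $t$ modulo $2^{k+1}$, $|t|$ denotes the minimal absolute value of an integer in the residue class of $t$. Compressions (for $\mathcal{C}$ as in the claim): Type 1: if $\mathcal{C}$ contains at least $\lambda>0$ elements each equal to $1$ or $-1$ and also an element $t$ with $1<|t|\le\lambda+1$, replace $t$ by $|t|$ copies of $1$ if $t\in[1,2^k-1]$ and by $|t|$ copies of $-1$ otherwise. Type 2: if $\mathcal{C}$ contains an element $-t$ and two copies of $2^k-t$, replace the two copies of $2^k-t$ by two copies of $-t$. Type 3: if $\mathcal{C}$ contains at least $2^{k-1}$ elements each equal to $\pm1$ and two elements $u,v$ lying in the range $[(3/2)2^{k-1},2^k-1]$, replace $u$ and $v$ by $u-2^k$ and $v-2^k$. *)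

theory Defs
  imports Main "HOL-Library.Multiset"
begin

text \<open>Residues modulo 2^(k+1) are represented by their canonical integer
representatives in {0..<2^(k+1)}. Collections are int multisets.\<close>

definition modulus :: "nat \<Rightarrow> int" where
  "modulus k = 2 ^ (k + 1)"

definition sumset :: "nat \<Rightarrow> int multiset \<Rightarrow> int set" where
  "sumset k D = {sum_mset S mod modulus k | S. S \<subseteq># D}"

definition rabs :: "nat \<Rightarrow> int \<Rightarrow> nat" where
  "rabs k t = nat (min (t mod modulus k) (modulus k - t mod modulus k))"

definition pm_one_count :: "nat \<Rightarrow> int multiset \<Rightarrow> nat" where
  "pm_one_count k C = count C 1 + count C (modulus k - 1)"

definition compress1 :: "nat \<Rightarrow> int multiset \<Rightarrow> int \<Rightarrow> int multiset \<Rightarrow> bool" where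
  "compress1 k C t C' \<longleftrightarrow>
     (\<exists>lam::nat. lam > 0 \<and> pm_one_count k C \<ge> lam \<and>
        t \<in># C \<and> 1 < rabs k t \<and> rabs k t \<le> lam + 1 \<and>
        C' = C - {#t#} + replicate_mset (rabs k t)
               (if 1 \<le> t \<and> t \<le> 2 ^ k - 1 then 1 else modulus k - 1))"

definition compress2 :: "nat \<Rightarrow> int multiset \<Rightarrow> int multiset \<Rightarrow> bool" where
  "compress2 k C C' \<longleftrightarrow>
     (\<exists>t::int. (- t) mod modulus k \<in># C \<and>
        {#(2 ^ k - t) mod modulus k, (2 ^ k - t) mod modulus k#} \<subseteq># C \<and>
        C' = C - {#(2 ^ k - t) mod modulus k, (2 ^ k - t) mod modulus k#}
               + {#(- t) mod modulus k, (- t) mod modulus k#})"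

definition compress3 :: "nat \<Rightarrow> int multiset \<Rightarrow> int multiset \<Rightarrow> bool" where
  "compress3 k C C' \<longleftrightarrow>
     pm_one_count k C \<ge> 2 ^ (k - 1) \<and>
     (\<exists>u v::int. {#u, v#} \<subseteq># C \<and>
        2 * u \<ge> 3 * 2 ^ (k - 1) \<and> u \<le> 2 ^ k - 1 \<and>
        2 * v \<ge> 3 * 2 ^ (k - 1) \<and> v \<le> 2 ^ k - 1 \<and>
        C' = C - {#u, v#} + {#(u - 2 ^ k) mod modulus k, (v - 2 ^ k) mod modulus k#})"

text \<open>C contains m pairwise disjoint (in occurrences) non-empty sub-collections
each summing to 0 mod 2^(k+1).\<close>
definition has_zero_subcolls :: "nat \<Rightarrow> int multiset \<Rightarrow> nat \<Rightarrow> bool" where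
  "has_zero_subcolls k C m \<longleftrightarrow>
     (\<exists>Ss :: int multiset list. length Ss = m \<and>
        (\<forall>S \<in> set Ss. S \<noteq> {#} \<and> sum_mset S mod modulus k = 0) \<and>
        sum_list Ss \<subseteq># C)"

end

theory Submission
  imports Defs
begin


lemma split_sub:
  fixes S X Y :: "'a multiset"
  assumes "S \<subseteq># X + Y"
  shows "\<exists>A Q. S = A + Q \<and> A \<subseteq># X \<and> Q \<subseteq># Y"
proof (intro exI conjI)
  show "S = (S \<inter># X) + (S - X)" by (simp add: multiset_eq_iff min_def)
  show "S \<inter># X \<subseteq># X" by simp
  show "S - X \<subseteq># Y" using assms
    by (simp add: subset_eq_diff_conv add.commute)
qed

lemma sub2:
  fixes R :: "'a multiset"
  assumes "R \<subseteq># {#a, b#}"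
  shows "R = {#} \<or> R = {#a#} \<or> R = {#b#} \<or> R = {#a, b#}"
proof (cases "a \<in># R")
  case True
  then obtain R' where R: "R = add_mset a R'" by (metis multi_member_split)
  with assms have "R' \<subseteq># {#b#}" by simp
  then have "R' = {#} \<or> R' = {#b#}" by (metis nonempty_subseteq_mset_eq_single)
  then show ?thesis using R by auto
next
  case False
  have "R \<subseteq># {#b#}" unfolding subseteq_mset_def
  proof
    fix x
    have h: "count R x \<le> count {#a, b#} x" using assms by (simp add: subseteq_mset_def)
    show "count R x \<le> count {#b#} x"
    proof (cases "x = a")
      case True
      then show ?thesis using False by (simp add: not_in_iff)
    next
      case xa: False
      then show ?thesis using h by simp
    qed
  qed
  then show ?thesis by (metis nonempty_subseteq_mset_eq_single)
qed


lemma sum_rem: "x \<in># A \<Longrightarrow> sum_mset A = x + sum_mset (A - {#x#})"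
proof -
  assume "x \<in># A"
  then obtain A' where "A = add_mset x A'" by (blast dest: multi_member_split)
  then show ?thesis by simp
qed

lemma msub_diff: "A \<subseteq># B \<Longrightarrow> A - C \<subseteq># B - C"
  unfolding subseteq_mset_def by (simp add: diff_le_mono)

lemma mem_sub_sum: "S \<in># F \<Longrightarrow> S \<subseteq># sum_mset F"
proof -
  assume "S \<in># F"
  then obtain F' where "F = add_mset S F'" by (blast dest: multi_member_split)
  then show ?thesis by simp
qed

lemma sum_sub_mono: "G \<subseteq># F \<Longrightarrow> sum_mset G \<subseteq># sum_mset (F::'a multiset multiset)"
proof -
  assume "G \<subseteq># F"
  then obtain H where "F = G + H" by (metis mset_subset_eq_exists_conv)
  then show ?thesis by simp
qed

lemma count_sum_ge: "(\<forall>S\<in>#G. e \<in># S) \<Longrightarrow> size G \<le> count (sum_mset G) e"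
proof (induction G)
  case empty then show ?case by simp
next
  case (add x G)
  then have a: "0 < count x e" "size G \<le> count (sum_mset G) e" by auto
  have eq: "count (sum_mset (add_mset x G)) e = count x e + count (sum_mset G) e" by simp
  have "size (add_mset x G) = Suc (size G)" by simp
  then show ?case using eq a by linarith
qed

lemma sum_zero_mod: "(\<forall>S\<in>#G. sum_mset S mod (M::int) = 0) \<Longrightarrow> sum_mset (sum_mset G) mod M = 0"
proof (induction G)
  case empty then show ?case by simp
next
  case (add x G)
  then have "sum_mset x mod M = 0" "sum_mset (sum_mset G) mod M = 0" by auto
  then show ?case by (simp add: mod_add_eq[symmetric])
qed

lemma count_sum_zero: "(\<forall>S\<in>#G. e \<notin># S) \<Longrightarrow> count (sum_mset G) e = 0"
  by (induction G) (auto simp: count_eq_zero_iff)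

lemma sub_size: "n \<le> size G \<Longrightarrow> \<exists>G0. G0 \<subseteq># G \<and> size G0 = n"
proof -
  assume n: "n \<le> size G"
  obtain xs where xs: "mset xs = G" using ex_mset by blast
  have "mset (take n xs) \<subseteq># mset xs"
    by (metis append_take_drop_id mset_append mset_subset_eq_add_left)
  moreover have "size (mset (take n xs)) = n" using n xs by auto
  ultimately show ?thesis using xs by blast
qed



definition notpm :: "int \<Rightarrow> int \<Rightarrow> bool" where
  "notpm M x \<longleftrightarrow> x \<noteq> 1 \<and> x \<noteq> M - 1"

lemma decomp:
  fixes A X :: "int multiset" and M :: int
  assumes "A \<subseteq># X"
  shows "\<exists>Ar z. Ar \<subseteq># filter_mset (notpm M) X \<and> - int (count X (M - 1)) \<le> z \<and>
      z \<le> int (count X 1) \<and> sum_mset A mod M = (sum_mset Ar + z) mod M"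
proof -
  define c1 where "c1 = count A 1"
  define c2 where "c2 = count A (M - 1)"
  have A: "A = filter_mset (notpm M) A + filter_mset (\<lambda>x. x = 1) A + filter_mset (\<lambda>x. x = M - 1 \<and> x \<noteq> 1) A"
    by (auto simp: multiset_eq_iff notpm_def)
  have f1: "filter_mset (\<lambda>x. x = 1) A = replicate_mset c1 1"
    unfolding c1_def by (simp add: filter_eq_replicate_mset)
  have f2: "sum_mset (filter_mset (\<lambda>x. x = M - 1 \<and> x \<noteq> 1) A) = (if M - 1 = 1 then 0 else int c2 * (M - 1))"
  proof (cases "M - 1 = 1")
    case True
    then have "filter_mset (\<lambda>x. x = M - 1 \<and> x \<noteq> 1) A = {#}" by (auto simp: filter_mset_eq_conv)
    then show ?thesis using True by simp
  next
    case False
    then have "filter_mset (\<lambda>x. x = M - 1 \<and> x \<noteq> 1) A = replicate_mset c2 (M - 1)"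
    proof -
      have "{#x \<in># A. x = M - 1 \<and> x \<noteq> 1#} = {#x \<in># A. x = M - 1#}"
        using False by (intro filter_mset_cong) auto
      then show ?thesis unfolding c2_def by (simp add: filter_eq_replicate_mset)
    qed
    then show ?thesis using False by simp
  qed
  have "sum_mset A = sum_mset (filter_mset (notpm M) A) + int c1 + (if M - 1 = 1 then 0 else int c2 * (M - 1))"
    by (subst A) (simp add: f1 f2)
  define z where "z = int c1 - (if M - 1 = 1 then 0 else int c2)"
  have eq: "sum_mset A = sum_mset (filter_mset (notpm M) A) + z + (if M - 1 = 1 then 0 else int c2) * M"
    using \<open>sum_mset A = _\<close> unfolding z_def by (auto simp: algebra_simps)
  show ?thesis
  proof (intro exI conjI)
    show "filter_mset (notpm M) A \<subseteq># filter_mset (notpm M) X"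
      using assms by (simp add: multiset_filter_mono)
    have "c1 \<le> count X 1" "c2 \<le> count X (M - 1)" using assms unfolding c1_def c2_def
      by (auto simp: subseteq_mset_def)
    then show "- int (count X (M - 1)) \<le> z" "z \<le> int (count X 1)" unfolding z_def by auto
    show "sum_mset A mod M = (sum_mset (filter_mset (notpm M) A) + z) mod M"
      by (subst eq) simp
  qed
qed

lemma recomp:
  fixes Ar X :: "int multiset" and M z :: int
  assumes "Ar \<subseteq># filter_mset (notpm M) X" "- int (count X (M - 1)) \<le> z" "z \<le> int (count X 1)"
    and "M - 1 \<noteq> 1"
  shows "\<exists>B. B \<subseteq># X \<and> sum_mset B mod M = (sum_mset Ar + z) mod M"
proof -
  define B where "B = Ar + replicate_mset (nat z) 1 + replicate_mset (nat (- z)) (M - 1)"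
  have c1: "count Ar 1 = 0" "count Ar (M - 1) = 0"
    using assms(1) by (metis count_eq_zero_iff count_filter_mset mset_subset_eqD notpm_def)+
  have "B \<subseteq># X"
    unfolding subseteq_mset_def
  proof
    fix x
    show "count B x \<le> count X x"
    proof (cases "x = 1 \<or> x = M - 1")
      case True
      then show ?thesis using c1 assms(2,3,4) unfolding B_def by auto
    next
      case False
      then have "count Ar x \<le> count (filter_mset (notpm M) X) x"
        using assms(1) by (simp add: subseteq_mset_def)
      then show ?thesis using False unfolding B_def by (auto simp: notpm_def)
    qed
  qed
  moreover have "sum_mset B = sum_mset Ar + z + int (nat (- z)) * M"
    unfolding B_def by (auto simp: algebra_simps)
  ultimately show ?thesis by (intro exI[of _ B]) simp
qed



definition zf :: "nat \<Rightarrow> int multiset \<Rightarrow> int multiset multiset \<Rightarrow> bool" where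
  "zf k C F \<longleftrightarrow> (\<forall>S\<in>#F. S \<noteq> {#} \<and> sum_mset S mod modulus k = 0) \<and> sum_mset F \<subseteq># C"

lemma hz_to: "has_zero_subcolls k C m \<Longrightarrow> \<exists>F. size F = m \<and> zf k C F"
  unfolding has_zero_subcolls_def zf_def
  by (metis set_mset_mset size_mset sum_mset_sum_list)

lemma hz_from:
  assumes "m \<le> size F" "zf k C F"
  shows "has_zero_subcolls k C m"
proof -
  obtain G where G: "G \<subseteq># F" "size G = m" using sub_size assms(1) by blast
  obtain xs where xs: "mset xs = G" using ex_mset by blast
  show ?thesis unfolding has_zero_subcolls_def
  proof (intro exI conjI)
    show "length xs = m" using xs G by auto
    show "\<forall>S\<in>set xs. S \<noteq> {#} \<and> sum_mset S mod modulus k = 0"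
      using assms(2) G xs unfolding zf_def by (metis mset_subset_eqD set_mset_mset)
    show "sum_list xs \<subseteq># C"
      using assms(2) G xs sum_sub_mono unfolding zf_def
      by (metis subset_mset.order_trans sum_mset_sum_list)
  qed
qed

lemma mod_two_pow: "(2::int) ^ k mod modulus k = 2 ^ k"
  unfolding modulus_def by simp

lemma swap_lemma:
  fixes X :: "int multiset" and x1 x2 y1 y2 :: int
  assumes hx1: "x1 mod modulus k = (y1 + 2 ^ k) mod modulus k"
    and hx2: "x2 mod modulus k = (y2 + 2 ^ k) mod modulus k"
    and hyp: "\<forall>S. S \<subseteq># X + {#x1, x2#} \<longrightarrow> sum_mset S mod modulus k \<noteq> 2 ^ k"
    and F: "zf k (X + {#y1, y2#}) F"
  shows "\<exists>F'. size F' = size F \<and> zf k (X + {#x1, x2#}) F'"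
proof -
  let ?M = "modulus k"
  define T where "T = sum_mset F"
  define R where "R = T - X"
  have TC: "T \<subseteq># X + {#y1, y2#}" using F unfolding zf_def T_def by simp
  have R2: "R \<subseteq># {#y1, y2#}" unfolding R_def using TC
    by (simp add: subset_eq_diff_conv add.commute)
  have TRX: "T - R \<subseteq># X" unfolding R_def subseteq_mset_def by (intro allI) simp
  have RT: "R \<subseteq># T" unfolding R_def by simp
  have Fs: "\<And>S. S \<in># F \<Longrightarrow> S \<noteq> {#} \<and> sum_mset S mod ?M = 0" using F unfolding zf_def by auto
  have contra: False if "S \<in># F" "y \<in># S" "S - {#y#} \<subseteq># X" "x \<in># {#x1, x2#}"
    "x mod ?M = (y + 2 ^ k) mod ?M" for S x y
  proof -
    have "S - {#y#} + {#x#} \<subseteq># X + {#x1, x2#}" using that(3,4)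
      by (meson mset_subset_eq_single subset_mset.add_mono)
    moreover have "sum_mset (S - {#y#} + {#x#}) = sum_mset S - y + x"
      using sum_rem[OF that(2)] by simp
    moreover have "(sum_mset S - y + x) mod ?M = 2 ^ k"
    proof -
      have h0: "sum_mset S mod ?M = 0 mod ?M" using Fs[OF that(1)] by simp
      have "(sum_mset S - y + x) mod ?M = (0 - y + (y + 2 ^ k)) mod ?M"
        by (rule mod_add_cong[OF mod_diff_cong[OF h0 refl] that(5)])
      then show ?thesis using mod_two_pow by simp
    qed
    ultimately show False using hyp by metis
  qed
  from sub2[OF R2] consider "R = {#}" | "R = {#y1#}" | "R = {#y2#}" | "R = {#y1, y2#}" by blast
  then show ?thesis
  proof cases
    case 1
    then have "T \<subseteq># X + {#x1, x2#}" using TRX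
      by (metis diff_zero subset_mset.order_trans mset_subset_eq_add_left)
    then show ?thesis using F unfolding zf_def T_def by auto
  next
    case 2
    then have "y1 \<in># T" using RT by auto
    then obtain S where S: "S \<in># F" "y1 \<in># S" unfolding T_def by auto
    have "S - {#y1#} \<subseteq># T - {#y1#}" using mem_sub_sum[OF S(1)] unfolding T_def
      by (rule msub_diff)
    then have False using contra[OF S, of x1] TRX 2 hx1 by (auto intro: subset_mset.order_trans)
    then show ?thesis ..
  next
    case 3
    then have "y2 \<in># T" using RT by auto
    then obtain S where S: "S \<in># F" "y2 \<in># S" unfolding T_def by auto
    have "S - {#y2#} \<subseteq># T - {#y2#}" using mem_sub_sum[OF S(1)] unfolding T_def
      by (rule msub_diff)
    then have False using contra[OF S, of x2] TRX 3 hx2 by (auto intro: subset_mset.order_trans)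
    then show ?thesis ..
  next
    case 4
    have "y1 \<in># {#y1, y2#}" by simp
    then have "y1 \<in># T" using RT 4 by (metis mset_subset_eqD)
    then obtain S where S: "S \<in># F" "y1 \<in># S" unfolding T_def by auto
    have ST: "S \<subseteq># T" using mem_sub_sum[OF S(1)] unfolding T_def .
    show ?thesis
    proof (cases "{#y1, y2#} \<subseteq># S")
      case False
      have "S - {#y1#} \<subseteq># T - R"
        unfolding 4 subseteq_mset_def
      proof
        fix z
        have a: "count S z \<le> count T z" using ST by (simp add: subseteq_mset_def)
        have b: "count {#y1, y2#} z \<le> count T z" using RT 4 by (simp add: subseteq_mset_def)
        have c: "1 \<le> count S y1" using S(2) by (simp add: Suc_le_eq)
        have d: "\<not> (\<forall>w. count {#y1, y2#} w \<le> count S w)" using False by (simp add: subseteq_mset_def)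
        obtain w where w: "count S w < count {#y1, y2#} w" using d by (auto simp: not_le)
        have "count S y2 = 0 \<or> (y1 = y2 \<and> count S y2 = 1)"
        proof (cases "y1 = y2")
          case True
          then have "count S y1 < 2" using w by (cases "w = y1") auto
          then show ?thesis using True c by auto
        next
          case False
          then have "w = y1 \<or> w = y2" using w by (cases "w = y1"; cases "w = y2") auto
          then have "w = y2" using w c False by (auto simp: count_eq_zero_iff)
          then have "count S y2 < 1" using w False by simp
          then show ?thesis by simp
        qed
        then show "count (S - {#y1#}) z \<le> count (T - {#y1, y2#}) z"
          using a b by (auto split: if_splits)
      qed
      then have False using contra[OF S, of x1] TRX hx1 by (auto intro: subset_mset.order_trans)
      then show ?thesis ..
    next
      case True
      define S' where "S' = S - {#y1, y2#} + {#x1, x2#}"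
      define F' where "F' = F - {#S#} + {#S'#}"
      obtain F0 where F0: "F = add_mset S F0" using S(1) by (blast dest: multi_member_split)
      have "size F' = size F" unfolding F'_def F0 by simp
      moreover have "zf k (X + {#x1, x2#}) F'"
        unfolding zf_def
      proof (rule conjI)
        obtain S0 where S0: "S = {#y1, y2#} + S0" using True by (metis mset_subset_eq_exists_conv)
        have sS': "sum_mset S' = sum_mset S - y1 - y2 + x1 + x2"
          unfolding S'_def S0 by simp
        have h0: "sum_mset S mod ?M = 0 mod ?M" using Fs[OF S(1)] by simp
        have "sum_mset S' mod ?M = (0 - y1 - y2 + (y1 + 2 ^ k) + (y2 + 2 ^ k)) mod ?M"
          unfolding sS' by (rule mod_add_cong[OF mod_add_cong[OF mod_diff_cong[OF mod_diff_cong[OF h0 refl] refl] hx1] hx2])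
        also have "\<dots> = (2 * 2 ^ k) mod ?M" by simp
        also have "\<dots> = 0" unfolding modulus_def by simp
        finally have z: "sum_mset S' mod ?M = 0" .
        show "\<forall>Q0\<in>#F'. Q0 \<noteq> {#} \<and> sum_mset Q0 mod ?M = 0"
        proof
          fix Q0 assume "Q0 \<in># F'"
          then have "Q0 \<in># F \<or> Q0 = S'" unfolding F'_def by (auto dest: in_diffD)
          then show "Q0 \<noteq> {#} \<and> sum_mset Q0 mod ?M = 0"
            using Fs z unfolding S'_def by auto
        qed
      next
        obtain S0 where S0: "S = {#y1, y2#} + S0" using True by (metis mset_subset_eq_exists_conv)
        obtain U where U: "T = S + U" using ST by (metis mset_subset_eq_exists_conv)
        have "sum_mset F' = (T - S) + S'" unfolding F'_def T_def using sum_rem[OF S(1)]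
          by simp
        also have "\<dots> = (T - R) + {#x1, x2#}"
          unfolding S'_def 4 U S0 by (simp add: add.assoc add.left_commute)
        also have "\<dots> \<subseteq># X + {#x1, x2#}" using TRX by simp
        finally show "sum_mset F' \<subseteq># X + {#x1, x2#}" .
      qed
      ultimately show ?thesis by blast
    qed
  qed
qed



lemma in_sumsetI: "B \<subseteq># D \<Longrightarrow> x = sum_mset B mod modulus k \<Longrightarrow> x \<in> sumset k D"
  unfolding sumset_def by blast

lemma c1_part:
  assumes k1: "k \<ge> 1"
    and h2: "\<forall>x \<in># C. 1 \<le> x \<and> x < modulus k"
    and h3: "\<forall>S. S \<subseteq># C \<longrightarrow> sum_mset S mod modulus k \<noteq> 2 ^ k"
    and cp: "compress1 k C t C'"
  shows "sumset k C' = sumset k C \<and>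
    (\<forall>m. has_zero_subcolls k C' (m + rabs k t - 1) \<longrightarrow> has_zero_subcolls k C m)"
proof -
  let ?M = "modulus k"
  define n where "n = rabs k t"
  define e where "e = (if 1 \<le> t \<and> t \<le> 2 ^ k - 1 then 1 else ?M - 1)"
  define X where "X = C - {#t#}"
  obtain lam :: nat where lam: "lam > 0" "pm_one_count k C \<ge> lam" "t \<in># C" "1 < n" "n \<le> lam + 1"
    and C': "C' = X + replicate_mset n e"
    using cp unfolding compress1_def n_def e_def X_def by blast
  have "(2::int) ^ 2 \<le> 2 ^ (k + 1)" by (rule power_increasing) (use k1 in auto)
  then have M4: "?M \<ge> 4" unfolding modulus_def by simp
  have CX: "C = X + {#t#}" unfolding X_def using lam(3) by simp
  have tr: "1 \<le> t" "t < ?M" using h2 lam(3) by auto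
  have tmod: "t mod ?M = t" using tr by simp
  have Mk: "?M = 2 * 2 ^ k" unfolding modulus_def by simp
  have tne: "t \<noteq> 2 ^ k"
  proof
    assume "t = 2 ^ k"
    then have "sum_mset {#t#} mod ?M = 2 ^ k" using tmod by simp
    moreover have "{#t#} \<subseteq># C" using lam(3) by simp
    ultimately show False using h3 by blast
  qed
  have nval: "int n = min t (?M - t)" unfolding n_def rabs_def tmod using tr by simp
  have cases_e: "(e = 1 \<and> int n = t) \<or> (e = ?M - 1 \<and> int n = ?M - t \<and> e \<noteq> 1)"
    using nval tne Mk M4 tr unfolding e_def by auto
  have tpm: "t \<noteq> 1" "t \<noteq> ?M - 1" using lam(4) nval by auto
  have cnt: "count X 1 = count C 1" "count X (?M - 1) = count C (?M - 1)"
    unfolding X_def using tpm by auto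
  have M1: "?M - 1 \<noteq> 1" using M4 by simp
  have pq: "int n \<le> int (count X 1) + int (count X (?M - 1)) + 1"
    using lam(2,5) cnt unfolding pm_one_count_def by simp
  have ne_mod: "(int n * e) mod ?M = t mod ?M"
  proof -
    from cases_e show ?thesis
    proof
      assume "e = 1 \<and> int n = t" then show ?thesis by simp
    next
      assume a: "e = ?M - 1 \<and> int n = ?M - t \<and> e \<noteq> 1"
      then have "int n * e = (?M - t) * (?M - 1)" by simp
      also have "\<dots> = t + (?M - t - 1) * ?M" by (simp add: algebra_simps)
      finally have "int n * e = t + (?M - t - 1) * ?M" .
      then show ?thesis by simp
    qed
  qed
  have sumR: "sum_mset (replicate_mset n e) = int n * e" by simp
  have sub1: "sumset k C \<subseteq> sumset k C'"
  proof
    fix x assume "x \<in> sumset k C"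
    then obtain S where S: "S \<subseteq># C" "x = sum_mset S mod ?M" unfolding sumset_def by blast
    show "x \<in> sumset k C'"
    proof (cases "t \<in># S")
      case True
      define B where "B = S - {#t#} + replicate_mset n e"
      have "B \<subseteq># C'" unfolding B_def C' X_def using msub_diff[OF S(1), of "{#t#}"]
        by simp
      moreover have "sum_mset B = sum_mset S - t + int n * e"
        unfolding B_def using sum_rem[OF True] by simp
      then have "sum_mset B mod ?M = (sum_mset S - t + t) mod ?M"
        using mod_add_cong[OF refl ne_mod, of "sum_mset S - t"] by simp
      then have "sum_mset B mod ?M = sum_mset S mod ?M" by simp
      ultimately show ?thesis using S(2) by (intro in_sumsetI[of B]) auto
    next
      case False
      then have "S \<subseteq># X" unfolding X_def using msub_diff[OF S(1), of "{#t#}"] False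
        by (simp add: diff_single_trivial)
      then have "S \<subseteq># C'" unfolding C' by (auto intro: subset_mset.order_trans)
      then show ?thesis using S(2) by (intro in_sumsetI[of S])
    qed
  qed
  have sub2: "sumset k C' \<subseteq> sumset k C"
  proof
    fix x assume "x \<in> sumset k C'"
    then obtain S where S: "S \<subseteq># C'" "x = sum_mset S mod ?M" unfolding sumset_def by blast
    obtain Ar z where Az: "Ar \<subseteq># filter_mset (notpm ?M) C'" "- int (count C' (?M - 1)) \<le> z"
      "z \<le> int (count C' 1)" "sum_mset S mod ?M = (sum_mset Ar + z) mod ?M"
      using decomp[OF S(1)] by blast
    have fe: "filter_mset (notpm ?M) (replicate_mset n e) = {#}"
      using cases_e by (auto simp: notpm_def)
    have Ar: "Ar \<subseteq># filter_mset (notpm ?M) X" using Az(1) fe unfolding C' by simp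
    have XC: "X \<subseteq># C" unfolding CX by simp
    show "x \<in> sumset k C"
    proof (cases "- int (count X (?M - 1)) \<le> z \<and> z \<le> int (count X 1)")
      case True
      then obtain B where "B \<subseteq># X" "sum_mset B mod ?M = (sum_mset Ar + z) mod ?M"
        using recomp[OF Ar _ _ M1] by blast
      then show ?thesis using S(2) Az(4) XC by (intro in_sumsetI[of B]) (auto intro: subset_mset.order_trans)
    next
      case False
      from cases_e show ?thesis
      proof
        assume a: "e = 1 \<and> int n = t"
        then have "count C' 1 = count X 1 + n" "count C' (?M - 1) = count X (?M - 1)"
          unfolding C' using M1 by auto
        then have z: "- int (count X (?M - 1)) \<le> z - int n" "z - int n \<le> int (count X 1)"
          using Az(2,3) False pq by auto
        obtain B where "B \<subseteq># X" "sum_mset B mod ?M = (sum_mset Ar + (z - int n)) mod ?M"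
          using recomp[OF Ar z M1] by blast
        moreover have "B + {#t#} \<subseteq># C" using \<open>B \<subseteq># X\<close> unfolding CX by simp
        moreover have "sum_mset (B + {#t#}) mod ?M = (sum_mset Ar + z) mod ?M"
          using mod_add_cong[OF \<open>sum_mset B mod ?M = _\<close> refl, of t] a by (simp add: add.commute)
        ultimately show ?thesis using S(2) Az(4) by (intro in_sumsetI[of "B + {#t#}"]) auto
      next
        assume a: "e = ?M - 1 \<and> int n = ?M - t \<and> e \<noteq> 1"
        then have "count C' 1 = count X 1" "count C' (?M - 1) = count X (?M - 1) + n"
          unfolding C' using M1 by auto
        then have z: "- int (count X (?M - 1)) \<le> z + int n" "z + int n \<le> int (count X 1)"
          using Az(2,3) False pq by auto
        obtain B where "B \<subseteq># X" "sum_mset B mod ?M = (sum_mset Ar + (z + int n)) mod ?M"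
          using recomp[OF Ar z M1] by blast
        moreover have "B + {#t#} \<subseteq># C" using \<open>B \<subseteq># X\<close> unfolding CX by simp
        moreover have "sum_mset (B + {#t#}) mod ?M = (sum_mset Ar + z) mod ?M"
        proof -
          have "sum_mset (B + {#t#}) mod ?M = (sum_mset B + t) mod ?M" by (simp add: add.commute)
          also have "\<dots> = (sum_mset B mod ?M + t) mod ?M" by (rule mod_add_left_eq[symmetric])
          also have "\<dots> = (sum_mset Ar + (z + int n) + t) mod ?M"
            using \<open>sum_mset B mod ?M = _\<close> by (simp add: mod_add_left_eq)
          also have "\<dots> = (sum_mset Ar + z + 1 * ?M) mod ?M"
          proof -
            have "sum_mset Ar + (z + int n) + t = sum_mset Ar + z + 1 * ?M" using a by simp
            then show ?thesis by (rule arg_cong)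
          qed
          also have "\<dots> = (sum_mset Ar + z) mod ?M" by simp
          finally show ?thesis .
        qed
        ultimately show ?thesis using S(2) Az(4) by (intro in_sumsetI[of "B + {#t#}"]) auto
      qed
    qed
  qed
  have fam: "has_zero_subcolls k C m" if hz: "has_zero_subcolls k C' (m + n - 1)" for m
  proof -
    obtain F where F: "size F = m + n - 1" "zf k C' F" using hz_to[OF hz] by blast
    define T where "T = sum_mset F"
    have TC: "T \<subseteq># X + replicate_mset n e" using F(2) unfolding zf_def T_def C' by simp
    have Fs: "\<And>S. S \<in># F \<Longrightarrow> S \<noteq> {#} \<and> sum_mset S mod ?M = 0" using F(2) unfolding zf_def by auto
    define G where "G = filter_mset (\<lambda>S. e \<in># S) F"
    show ?thesis
    proof (cases "n \<le> size G")
      case True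
      obtain G0 where G0: "G0 \<subseteq># G" "size G0 = n" using sub_size[OF True] by blast
      have G0F: "G0 \<subseteq># F" using G0(1) unfolding G_def by (meson multiset_filter_subset subset_mset.order_trans)
      define W where "W = sum_mset G0"
      define R where "R = replicate_mset n e"
      have "size G0 \<le> count W e" unfolding W_def
        by (rule count_sum_ge) (use G0(1) in \<open>auto simp: G_def dest: mset_subset_eqD\<close>)
      then have RW: "R \<subseteq># W" unfolding R_def using G0(2)
        by (simp add: subseteq_mset_def)
      define W' where "W' = W - R + {#t#}"
      define F' where "F' = (F - G0) + {#W'#}"
      obtain H where H: "F = G0 + H" using G0F by (metis mset_subset_eq_exists_conv)
      obtain W0 where W0def: "W = R + W0" using RW by (metis mset_subset_eq_exists_conv)
      have FH: "F - G0 = H" unfolding H by simp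
      have "size F = n + size H" using H G0(2) by simp
      then have sF': "size F' = m" unfolding F'_def FH using F(1) lam(4) by simp
      have WT: "T = sum_mset (F - G0) + W" unfolding T_def W_def FH H by (simp add: add.commute)
      have W0: "sum_mset W mod ?M = 0" unfolding W_def
        by (rule sum_zero_mod) (use G0F Fs in \<open>auto dest: mset_subset_eqD\<close>)
      have sW': "sum_mset W' = sum_mset W - int n * e + t"
        unfolding W'_def W0def using sumR unfolding R_def by simp
      have W'0: "sum_mset W' mod ?M = 0"
      proof -
        have h0: "sum_mset W mod ?M = 0 mod ?M" using W0 by simp
        have "sum_mset W' mod ?M = (0 - t + t) mod ?M"
          unfolding sW' by (rule mod_add_cong[OF mod_diff_cong[OF h0 ne_mod] refl])
        then show ?thesis by simp
      qed
      have "zf k C F'" unfolding zf_def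
      proof (rule conjI)
        show "\<forall>S\<in>#F'. S \<noteq> {#} \<and> sum_mset S mod ?M = 0"
        proof
          fix S assume "S \<in># F'"
          then have "S \<in># F \<or> S = W'" unfolding F'_def by (auto dest: in_diffD)
          then show "S \<noteq> {#} \<and> sum_mset S mod ?M = 0" using Fs W'0 unfolding W'_def by auto
        qed
      next
        have "sum_mset F' = (T - R) + {#t#}" unfolding F'_def W'_def WT FH W0def
          by (simp add: add.assoc add.left_commute)
        also have "\<dots> \<subseteq># X + {#t#}" using TC unfolding R_def
          by (simp add: subset_eq_diff_conv)
        finally show "sum_mset F' \<subseteq># C" unfolding CX .
      qed
      then show ?thesis using hz_from[of m F'] sF' by simp
    next
      case False
      define F2 where "F2 = filter_mset (\<lambda>S. e \<notin># S) F"
      have "F = G + F2" unfolding G_def F2_def by (rule multiset_partition)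
      then have "size F = size G + size F2" using arg_cong[of F "G + F2" size] by simp
      then have sz: "m \<le> size F2" using False F(1) by simp
      have F2F: "F2 \<subseteq># F" unfolding F2_def by simp
      have c0: "count (sum_mset F2) e = 0" by (rule count_sum_zero) (simp add: F2_def)
      have "sum_mset F2 \<subseteq># X"
        unfolding subseteq_mset_def
      proof
        fix x
        have "count (sum_mset F2) x \<le> count T x" using sum_sub_mono[OF F2F] unfolding T_def
          by (simp add: subseteq_mset_def)
        also have "\<dots> \<le> count X x + count (replicate_mset n e) x" using TC by (simp add: subseteq_mset_def)
        finally show "count (sum_mset F2) x \<le> count X x" using c0 by (cases "x = e") auto
      qed
      then have "zf k C F2" unfolding zf_def using Fs F2F CX
        by (auto dest: mset_subset_eqD intro: subset_mset.order_trans)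
      then show ?thesis using hz_from sz by blast
    qed
  qed
  show ?thesis using sub1 sub2 fam unfolding n_def by auto
qed



lemma c2_part:
  assumes k1: "k \<ge> 1"
    and h3: "\<forall>S. S \<subseteq># C \<longrightarrow> sum_mset S mod modulus k \<noteq> 2 ^ k"
    and cp: "compress2 k C C'"
  shows "sumset k C' \<subseteq> sumset k C \<and>
    (\<forall>m. has_zero_subcolls k C' m \<longrightarrow> has_zero_subcolls k C m)"
proof -
  let ?M = "modulus k"
  obtain t where t: "(- t) mod ?M \<in># C" "{#(2 ^ k - t) mod ?M, (2 ^ k - t) mod ?M#} \<subseteq># C"
    "C' = C - {#(2 ^ k - t) mod ?M, (2 ^ k - t) mod ?M#} + {#(- t) mod ?M, (- t) mod ?M#}"
    using cp unfolding compress2_def by blast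
  define a where "a = (2 ^ k - t) mod ?M"
  define b where "b = (- t) mod ?M"
  define X where "X = C - {#a, a#}"
  have aaC: "{#a, a#} \<subseteq># C" using t(2) unfolding a_def .
  have CX: "C = X + {#a, a#}" unfolding X_def by (rule subset_mset.diff_add[OF aaC, symmetric])
  have C': "C' = X + {#b, b#}" unfolding X_def a_def b_def t(3) ..
  have bC: "b \<in># C" using t(1) unfolding b_def .
  have ab: "a mod ?M = (b + 2 ^ k) mod ?M" unfolding a_def b_def
    by (simp add: mod_add_left_eq)
  have ab2: "(2 * a) mod ?M = (2 * b) mod ?M"
  proof -
    have "(2 * a) mod ?M = (2 * (a mod ?M)) mod ?M" by (simp add: mod_mult_right_eq)
    also have "\<dots> = (2 * (b + 2 ^ k)) mod ?M" unfolding ab by (simp add: mod_mult_right_eq)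
    also have "\<dots> = (2 * b + 1 * ?M) mod ?M" unfolding modulus_def by (simp add: algebra_simps)
    also have "\<dots> = (2 * b) mod ?M" by simp
    finally show ?thesis .
  qed
  have sub: "sumset k C' \<subseteq> sumset k C"
  proof
    fix x assume "x \<in> sumset k C'"
    then obtain S where S: "S \<subseteq># C'" "x = sum_mset S mod ?M" unfolding sumset_def by blast
    obtain A Q where AQ: "S = A + Q" "A \<subseteq># X" "Q \<subseteq># {#b, b#}" using split_sub S(1) unfolding C' by blast
    have AC: "A \<subseteq># C" using AQ(2) unfolding CX by (auto intro: subset_mset.order_trans)
    from sub2[OF AQ(3)] consider "Q = {#}" | "Q = {#b#}" | "Q = {#b, b#}" by auto
    then show "x \<in> sumset k C"
    proof cases
      case 1 then show ?thesis using S AQ AC by (intro in_sumsetI[of A]) auto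
    next
      case 3
      have "A + {#a, a#} \<subseteq># C" using AQ(2) unfolding CX by simp
      moreover have "sum_mset (A + {#a, a#}) mod ?M = sum_mset S mod ?M"
      proof -
        have e1: "sum_mset (A + {#a, a#}) = sum_mset A + 2 * a" by simp
        have e2: "sum_mset S = sum_mset A + 2 * b" unfolding AQ(1) 3 by simp
        show ?thesis unfolding e1 e2 by (rule mod_add_cong[OF refl ab2])
      qed
      ultimately show ?thesis using S(2) by (intro in_sumsetI[of "A + {#a, a#}"]) auto
    next
      case 2
      show ?thesis
      proof (cases "b \<in># A")
        case True
        have "A - {#b#} \<subseteq># X" using AQ(2) by (rule subset_mset.order_trans[OF diff_subset_eq_self])
        then have "A - {#b#} + {#a, a#} \<subseteq># C" unfolding CX by simp
        moreover have "sum_mset (A - {#b#} + {#a, a#}) mod ?M = sum_mset S mod ?M"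
        proof -
          have "sum_mset (A - {#b#} + {#a, a#}) = sum_mset A - b + 2 * a"
            using sum_rem[OF True] by simp
          then have "sum_mset (A - {#b#} + {#a, a#}) mod ?M = (sum_mset A - b + 2 * b) mod ?M"
            using mod_add_cong[OF refl ab2, of "sum_mset A - b"] by (simp only:)
          also have "sum_mset A - b + 2 * b = sum_mset S" unfolding AQ(1) 2 by simp
          finally show ?thesis .
        qed
        ultimately show ?thesis using S(2) by (intro in_sumsetI[of "A - {#b#} + {#a, a#}"]) auto
      next
        case False
        have "A + {#b#} \<subseteq># C"
          unfolding subseteq_mset_def
        proof
          fix y
          show "count (A + {#b#}) y \<le> count C y"
          proof (cases "y = b")
            case True
            then show ?thesis using False bC by (simp add: not_in_iff)
          next
            case False
            then show ?thesis using AC by (simp add: subseteq_mset_def)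
          qed
        qed
        then show ?thesis using S AQ 2 by (intro in_sumsetI[of "A + {#b#}"]) auto
      qed
    qed
  qed
  have fam: "has_zero_subcolls k C m" if hz: "has_zero_subcolls k C' m" for m
  proof -
    obtain F where F: "size F = m" "zf k C' F" using hz_to[OF hz] by blast
    have "\<exists>F'. size F' = size F \<and> zf k (X + {#a, a#}) F'"
      by (rule swap_lemma[OF ab ab]) (use h3 F(2) CX C' in auto)
    then obtain F' where "size F' = size F" "zf k (X + {#a, a#}) F'" by blast
    then show ?thesis using F(1) CX hz_from[of m F' k C] by simp
  qed
  show ?thesis using sub fam by blast
qed



lemma c3_part:
  assumes k1: "k \<ge> 1"
    and h3: "\<forall>S. S \<subseteq># C \<longrightarrow> sum_mset S mod modulus k \<noteq> 2 ^ k"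
    and cp: "compress3 k C C'"
  shows "sumset k C' \<subseteq> sumset k C \<and>
    (\<forall>m. has_zero_subcolls k C' m \<longrightarrow> has_zero_subcolls k C m)"
proof -
  let ?M = "modulus k"
  define K :: int where "K = 2 ^ (k - 1)"
  have kk: "k = Suc (k - 1)" using k1 by simp
  have K2: "(2::int) ^ k = 2 * K" unfolding K_def by (subst kk) simp
  have MK: "?M = 4 * K" unfolding modulus_def using K2 by simp
  have Kpos: "K \<ge> 1" unfolding K_def by simp
  obtain u v where uv: "{#u, v#} \<subseteq># C" "2 * u \<ge> 3 * K" "u \<le> 2 ^ k - 1" "2 * v \<ge> 3 * K" "v \<le> 2 ^ k - 1"
    "C' = C - {#u, v#} + {#(u - 2 ^ k) mod ?M, (v - 2 ^ k) mod ?M#}"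
    and pm: "pm_one_count k C \<ge> 2 ^ (k - 1)"
    using cp unfolding compress3_def K_def by auto
  define X where "X = C - {#u, v#}"
  have CX: "C = X + {#u, v#}" unfolding X_def by (rule subset_mset.diff_add[OF uv(1), symmetric])
  have C': "C' = X + {#(u - 2 ^ k) mod ?M, (v - 2 ^ k) mod ?M#}" unfolding X_def uv(6) ..
  have M1: "?M - 1 \<noteq> 1" using MK Kpos by simp
  have upm: "u \<noteq> 1" "u \<noteq> ?M - 1" "v \<noteq> 1" "v \<noteq> ?M - 1" using uv(2-5) K2 MK Kpos by auto
  have cnt: "count X 1 = count C 1" "count X (?M - 1) = count C (?M - 1)"
    unfolding X_def using upm by auto
  have pq: "int (count X 1) + int (count X (?M - 1)) \<ge> K"
  proof -
    have pm': "(2::nat) ^ (k - 1) \<le> count C 1 + count C (?M - 1)" using pm unfolding pm_one_count_def .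
    then have "int ((2::nat) ^ (k - 1)) \<le> int (count C 1 + count C (?M - 1))" by (simp only: of_nat_le_iff)
    then show ?thesis using cnt unfolding K_def by simp
  qed
  have XC: "X \<subseteq># C" unfolding CX by simp
  have ux: "u mod ?M = ((u - 2 ^ k) mod ?M + 2 ^ k) mod ?M" by (simp add: mod_add_left_eq)
  have vx: "v mod ?M = ((v - 2 ^ k) mod ?M + 2 ^ k) mod ?M" by (simp add: mod_add_left_eq)
  have single: "(sum_mset A + (w - 2 ^ k) mod ?M) mod ?M \<in> sumset k C"
    if A: "A \<subseteq># X" and w: "{#w, w2#} = {#u, v#}" "2 * w \<ge> 3 * K" "w \<le> 2 ^ k - 1"
      "2 * w2 \<ge> 3 * K" "w2 \<le> 2 ^ k - 1" for A w w2
  proof -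
    obtain Ar z where Az: "Ar \<subseteq># filter_mset (notpm ?M) X" "- int (count X (?M - 1)) \<le> z"
      "z \<le> int (count X 1)" "sum_mset A mod ?M = (sum_mset Ar + z) mod ?M"
      using decomp[OF A] by blast
    have goal: "(sum_mset A + (w - 2 ^ k) mod ?M) mod ?M = (sum_mset Ar + z + (w - 2 ^ k)) mod ?M"
      using mod_add_cong[OF Az(4) mod_mod_trivial, of "w - 2 ^ k"] by simp
    show ?thesis
    proof (cases "- int (count X (?M - 1)) \<le> z + (w - 2 ^ k)")
      case True
      have "z + (w - 2 ^ k) \<le> int (count X 1)" using Az(3) w(3) by simp
      then obtain B where "B \<subseteq># X" "sum_mset B mod ?M = (sum_mset Ar + (z + (w - 2 ^ k))) mod ?M"
        using recomp[OF Az(1) True _ M1] by blast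
      then show ?thesis using goal XC by (intro in_sumsetI[of B]) (auto simp: add.assoc intro: subset_mset.order_trans)
    next
      case False
      have z1: "- int (count X (?M - 1)) \<le> z + (2 ^ k - w2)" using Az(2) w(5) by simp
      have z2: "z + (2 ^ k - w2) \<le> int (count X 1)" using False pq w(2,4) K2 by linarith
      obtain B where B: "B \<subseteq># X" "sum_mset B mod ?M = (sum_mset Ar + (z + (2 ^ k - w2))) mod ?M"
        using recomp[OF Az(1) z1 z2 M1] by blast
      have "B + {#w, w2#} \<subseteq># C" using B(1) unfolding CX w(1) by simp
      moreover have "sum_mset (B + {#w, w2#}) mod ?M = (sum_mset Ar + z + (w - 2 ^ k)) mod ?M"
      proof -
        have "sum_mset (B + {#w, w2#}) = sum_mset B + (w + w2)" by simp
        then have "sum_mset (B + {#w, w2#}) mod ?M = (sum_mset Ar + (z + (2 ^ k - w2)) + (w + w2)) mod ?M"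
          using mod_add_cong[OF B(2) refl, of "w + w2"] by (simp only:)
        also have "sum_mset Ar + (z + (2 ^ k - w2)) + (w + w2) = sum_mset Ar + z + (w - 2 ^ k) + 1 * ?M"
          using K2 MK by simp
        also have "(sum_mset Ar + z + (w - 2 ^ k) + 1 * ?M) mod ?M = (sum_mset Ar + z + (w - 2 ^ k)) mod ?M" by simp
        finally show ?thesis .
      qed
      ultimately show ?thesis using goal by (intro in_sumsetI[of "B + {#w, w2#}"]) auto
    qed
  qed
  have sub: "sumset k C' \<subseteq> sumset k C"
  proof
    fix x assume "x \<in> sumset k C'"
    then obtain S where S: "S \<subseteq># C'" "x = sum_mset S mod ?M" unfolding sumset_def by blast
    obtain A Q where AQ: "S = A + Q" "A \<subseteq># X" "Q \<subseteq># {#(u - 2 ^ k) mod ?M, (v - 2 ^ k) mod ?M#}"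
      using split_sub S(1) unfolding C' by blast
    have AC: "A \<subseteq># C" using AQ(2) XC by (auto intro: subset_mset.order_trans)
    from sub2[OF AQ(3)] consider "Q = {#}" | "Q = {#(u - 2 ^ k) mod ?M#}" | "Q = {#(v - 2 ^ k) mod ?M#}"
      | "Q = {#(u - 2 ^ k) mod ?M, (v - 2 ^ k) mod ?M#}" by blast
    then show "x \<in> sumset k C"
    proof cases
      case 1 then show ?thesis using S AQ AC by (intro in_sumsetI[of A]) auto
    next
      case 2
      have "(sum_mset A + (u - 2 ^ k) mod ?M) mod ?M \<in> sumset k C"
        by (rule single[of A u v]) (use AQ uv in auto)
      then show ?thesis using S(2) AQ(1) 2 by (simp add: add.commute)
    next
      case 3
      have "(sum_mset A + (v - 2 ^ k) mod ?M) mod ?M \<in> sumset k C"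
        by (rule single[of A v u]) (use AQ uv in \<open>auto simp: add_mset_commute\<close>)
      then show ?thesis using S(2) AQ(1) 3 by (simp add: add.commute)
    next
      case 4
      have "A + {#u, v#} \<subseteq># C" using AQ(2) unfolding CX by simp
      moreover have "sum_mset (A + {#u, v#}) mod ?M = sum_mset S mod ?M"
      proof -
        have "sum_mset S = sum_mset A + (u - 2 ^ k) mod ?M + (v - 2 ^ k) mod ?M"
          unfolding AQ(1) 4 by (simp add: add.assoc)
        have m1: "((u - 2 ^ k) mod ?M) mod ?M = (u - 2 ^ k) mod ?M" by simp
        have m2: "((v - 2 ^ k) mod ?M) mod ?M = (v - 2 ^ k) mod ?M" by simp
        have "(sum_mset A + (u - 2 ^ k) mod ?M + (v - 2 ^ k) mod ?M) mod ?M = (sum_mset A + (u - 2 ^ k) + (v - 2 ^ k)) mod ?M"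
          by (rule mod_add_cong[OF mod_add_cong[OF refl m1] m2])
        then have "sum_mset S mod ?M = (sum_mset A + (u - 2 ^ k) + (v - 2 ^ k)) mod ?M"
          unfolding \<open>sum_mset S = _\<close> .
        also have "sum_mset A + (u - 2 ^ k) + (v - 2 ^ k) = sum_mset A + u + v + (- 1) * ?M"
          unfolding modulus_def by simp
        also have "(sum_mset A + u + v + (- 1) * ?M) mod ?M = (sum_mset A + u + v) mod ?M" by simp
        finally show ?thesis by (simp add: ac_simps)
      qed
      ultimately show ?thesis using S(2) by (intro in_sumsetI[of "A + {#u, v#}"]) auto
    qed
  qed
  have fam: "has_zero_subcolls k C m" if hz: "has_zero_subcolls k C' m" for m
  proof -
    obtain F where F: "size F = m" "zf k C' F" using hz_to[OF hz] by blast
    have "\<exists>F'. size F' = size F \<and> zf k (X + {#u, v#}) F'"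
      by (rule swap_lemma[OF ux vx]) (use h3 F(2) CX C' in auto)
    then obtain F' where "size F' = size F" "zf k (X + {#u, v#}) F'" by blast
    then show ?thesis using F(1) CX hz_from[of m F' k C] by simp
  qed
  show ?thesis using sub fam by blast
qed


theorem lemma3p5:
  fixes k :: nat and C :: "int multiset"
  assumes "k \<ge> 1"
    and "\<forall>x \<in># C. 1 \<le> x \<and> x < modulus k"
    and "\<forall>S. S \<subseteq># C \<longrightarrow> sum_mset S mod modulus k \<noteq> 2 ^ k"
  shows "(\<forall>t C'. compress1 k C t C' \<longrightarrow>
            sumset k C' = sumset k C \<and>
            (\<forall>m. has_zero_subcolls k C' (m + rabs k t - 1) \<longrightarrow> has_zero_subcolls k C m))
       \<and> (\<forall>C'. compress2 k C C' \<longrightarrow>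
            sumset k C' \<subseteq> sumset k C \<and>
            (\<forall>m. has_zero_subcolls k C' m \<longrightarrow> has_zero_subcolls k C m))
       \<and> (\<forall>C'. compress3 k C C' \<longrightarrow>
            sumset k C' \<subseteq> sumset k C \<and>
            (\<forall>m. has_zero_subcolls k C' m \<longrightarrow> has_zero_subcolls k C m))"
  using c1_part[OF assms] c2_part[OF assms(1,3)] c3_part[OF assms(1,3)] by blast

end
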